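(* Let $p,q\ge1$, let $\mu$ and $\nu$ be the uniform probability measures on the unit spheres $\mathcal{S}^{p-1}\subset\mathbb{R}^p$ and $\mathcal{S}^{q-1}\subset\mathbb{R}^q$. For random vectors $X\in\mathbb{R}^p$ and $Y\in\mathbb{R}^q$, $$\mathcal{V}^2(X,Y)=C_pC_q\int_{\mathcal{S}^{p-1}\times\mathcal{S}^{q-1}}\mathcal{V}^2(u^tX,v^tY)\,d\mu(u)\,d\nu(v).$$ Moreover, for a sample $(X_1,Y_1),\ldots,(X_n,Y_n)$, $$\mathcal{V}_n^2(X,Y)=C_pC_q\int_{\mathcal{S}^{p-1}\times\mathcal{S}^{q-1}}\mathcal{V}_n^2(u^tX,v^tY)\,d\mu(u)\,d\nu(v).$$
   Context: $|\cdot|$ is the Euclidean norm; $c_p=\frac{\pi^{(p+1)/2}}{\Gamma((p+1)/2)}$ and $C_p=\frac{c_1c_{p-1}}{c_p}=\frac{\sqrt{\pi}\,\Gamma((p+1)/2)}{\Gamma(p/2)}$ (similarly for $q$). The distance covariance is $\mathcal{V}^2(X,Y)=\int_{\mathbb{R}^{p+q}}\frac{|\phi_{X,Y}(t,s)-\phi_X(t)\phi_Y(s)|^2}{c_pc_q|t|^{p+1}|s|^{q+1}}dt\,ds$, where $\phi$ denote characteristic functions. The sample version $\mathcal{V}_n^2(X,Y)$ is the same integral with $\phi_X,\phi_Y,\phi_{X,Y}$ replaced by the empirical characteristic functions $\hat\phi_X(t)=\frac1n\sum_j e^{iX_j^tt}$, $\hat\phi_Y(s)=\frac1n\sum_j e^{iY_j^ts}$,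 $\hat\phi_{X,Y}(t,s)=\frac1n\sum_j e^{iX_j^tt+iY_j^ts}$. For the projections, $u^tX$ denotes the univariate random variable (resp. sample $(u^tX_1,\ldots,u^tX_n)$), and the distance covariances of univariate variables use $p=q=1$. *)

theory Defs
  imports "HOL-Probability.Probability"
begin

definition c_const :: "nat \<Rightarrow> real" where
  "c_const p = pi powr ((real p + 1) / 2) / Gamma ((real p + 1) / 2)"

definition C_const :: "nat \<Rightarrow> real" where
  "C_const p = sqrt pi * Gamma ((real p + 1) / 2) / Gamma (real p / 2)"

definition dcov_integral ::
  "('p::euclidean_space \<Rightarrow> 'q::euclidean_space \<Rightarrow> complex) \<Rightarrow> ('p \<Rightarrow> complex) \<Rightarrow> ('q \<Rightarrow> complex) \<Rightarrow> ennreal" where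
  "dcov_integral phiXY phiX phiY =
     (\<integral>\<^sup>+ ts. ennreal ((cmod (phiXY (fst ts) (snd ts) - phiX (fst ts) * phiY (snd ts)))\<^sup>2
        / (c_const DIM('p) * c_const DIM('q) * norm (fst ts) ^ (DIM('p) + 1)
           * norm (snd ts) ^ (DIM('q) + 1))) \<partial>(lborel :: ('p \<times> 'q) measure))"

definition char_fun :: "'a measure \<Rightarrow> ('a \<Rightarrow> 'p::euclidean_space) \<Rightarrow> 'p \<Rightarrow> complex" where
  "char_fun M X t = (\<integral>\<omega>. cis (t \<bullet> X \<omega>) \<partial>M)"

definition joint_char_fun ::
  "'a measure \<Rightarrow> ('a \<Rightarrow> 'p::euclidean_space) \<Rightarrow> ('a \<Rightarrow> 'q::euclidean_space) \<Rightarrow> 'p \<Rightarrow> 'q \<Rightarrow> complex" where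
  "joint_char_fun M X Y t s = (\<integral>\<omega>. cis (t \<bullet> X \<omega> + s \<bullet> Y \<omega>) \<partial>M)"

definition dcov :: "'a measure \<Rightarrow> ('a \<Rightarrow> 'p::euclidean_space) \<Rightarrow> ('a \<Rightarrow> 'q::euclidean_space) \<Rightarrow> ennreal" where
  "dcov M X Y = dcov_integral (joint_char_fun M X Y) (char_fun M X) (char_fun M Y)"

definition emp_char_fun :: "nat \<Rightarrow> (nat \<Rightarrow> 'p::euclidean_space) \<Rightarrow> 'p \<Rightarrow> complex" where
  "emp_char_fun n Xs t = (\<Sum>j<n. cis (t \<bullet> Xs j)) / of_nat n"

definition emp_joint_char_fun ::
  "nat \<Rightarrow> (nat \<Rightarrow> 'p::euclidean_space) \<Rightarrow> (nat \<Rightarrow> 'q::euclidean_space) \<Rightarrow> 'p \<Rightarrow> 'q \<Rightarrow> complex" where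
  "emp_joint_char_fun n Xs Ys t s = (\<Sum>j<n. cis (t \<bullet> Xs j + s \<bullet> Ys j)) / of_nat n"

definition dcov_n :: "nat \<Rightarrow> (nat \<Rightarrow> 'p::euclidean_space) \<Rightarrow> (nat \<Rightarrow> 'q::euclidean_space) \<Rightarrow> ennreal" where
  "dcov_n n Xs Ys = dcov_integral (emp_joint_char_fun n Xs Ys) (emp_char_fun n Xs) (emp_char_fun n Ys)"

text \<open>Uniform probability measure on the unit sphere S^{p-1} (normalised surface measure),
  realised as the cone measure: the image of the uniform distribution on the unit ball
  under radial projection x \<mapsto> x / |x|.\<close>
definition sphere_unif :: "'p::euclidean_space measure" where
  "sphere_unif = distr (uniform_measure lborel (ball 0 1)) borel (\<lambda>x. x /\<^sub>R norm x)"

end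

theory Submission
  imports Defs
begin

lemma vol_ball1: "emeasure lborel (ball (0::'p::euclidean_space) 1) = ennreal (unit_ball_vol DIM('p))"
  using emeasure_ball[where c="0::'p" and r=1] by simp

lemma vol_pos: "unit_ball_vol (real DIM('p::euclidean_space)) > 0"
  using unit_ball_vol_pos[of "real DIM('p)"] by simp

lemma sets_sphere_unif[measurable_cong, simp]: "sets (sphere_unif :: 'p::euclidean_space measure) = sets borel"
  unfolding sphere_unif_def by simp

lemma space_sphere_unif[simp]: "space (sphere_unif :: 'p::euclidean_space measure) = UNIV"
  unfolding sphere_unif_def by simp

lemma prob_space_sphere_unif: "prob_space (sphere_unif :: 'p::euclidean_space measure)"
proof -
  have ne: "unit_ball_vol (real DIM('p)) \<noteq> 0"
    using vol_pos[where 'p='p] by linarith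
  have "prob_space (uniform_measure lborel (ball (0::'p) 1))"
    by (intro prob_space_uniform_measure) (simp_all add: vol_ball1 ne)
  then show ?thesis unfolding sphere_unif_def
    by (rule prob_space.prob_space_distr) simp
qed

lemma nn_integral_sphere_unif:
  assumes [measurable]: "h \<in> borel_measurable (borel :: 'p::euclidean_space measure)"
  shows "(\<integral>\<^sup>+u. h u \<partial>(sphere_unif::'p measure)) =
     (\<integral>\<^sup>+x. h (x /\<^sub>R norm x) * indicator (ball 0 1) x \<partial>lborel) / ennreal (unit_ball_vol DIM('p))"
  unfolding sphere_unif_def
  by (simp add: nn_integral_distr nn_integral_uniform_measure vol_ball1)

lemma AE_sphere_unif: "AE u in (sphere_unif::'p::euclidean_space measure). norm u = 1"
  unfolding sphere_unif_def
  apply (subst AE_distr_iff)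
    apply simp
   apply simp
  apply (rule AE_uniform_measureI)
   apply simp
  using AE_lborel_singleton[of "0::'p"] by eventually_elim simp

lemma tail_integral_half:
  fixes a :: real and p :: nat
  assumes a: "a > 0" and p: "p \<ge> 1"
  shows "(\<integral>\<^sup>+t. ennreal (a ^ p / t ^ (p + 1)) * indicator {a<..} t \<partial>lborel) = ennreal (1 / p)"
proof -
  have "(\<integral>\<^sup>+t. ennreal (a ^ p / t ^ (p + 1)) * indicator {a<..} t \<partial>lborel)
      = (\<integral>\<^sup>+t. ennreal (a ^ p / t ^ (p + 1)) * indicator {a..} t \<partial>lborel)"
    by (intro nn_integral_cong_AE eventually_mono[OF AE_lborel_singleton[of a]])
       (auto split: split_indicator)
  also have "\<dots> = ennreal (0 - (- (a ^ p / real p) * inverse (a ^ p)))"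
  proof (rule nn_integral_FTC_atLeast[where F="\<lambda>t. - (a ^ p / real p) * inverse (t ^ p)" and T=0])
    show "(\<lambda>t. a ^ p / t ^ (p + 1)) \<in> borel_measurable borel" by measurable
    show "((\<lambda>t. - (a ^ p / real p) * inverse (t ^ p)) has_real_derivative a ^ p / x ^ (p + 1)) (at x)"
      if "a \<le> x" for x
    proof -
      from that have x: "x > 0" using a by simp
      have "((\<lambda>t. - (a ^ p / real p) * inverse (t ^ p)) has_real_derivative
              - (a ^ p / real p) * (- (real p * x ^ (p - Suc 0) * inverse ((x ^ p) ^ Suc (Suc 0))))) (at x)"
        by (intro DERIV_cmult DERIV_inverse_fun DERIV_pow) (use x in simp)
      moreover have "- (a ^ p / real p) * (- (real p * x ^ (p - Suc 0) * inverse ((x ^ p) ^ Suc (Suc 0)))) = a ^ p / x ^ (p + 1)"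
      proof -
        obtain k where k: "p = Suc k" using p by (cases p) auto
        have e: "(x ^ p) ^ Suc (Suc 0) = x ^ (p + 1) * x ^ (p - Suc 0)"
          unfolding k power_add by (simp add: algebra_simps)
        have "- (a ^ p / real p) * (- (real p * x ^ (p - Suc 0) * inverse ((x ^ p) ^ Suc (Suc 0))))
            = a ^ p * (x ^ (p - Suc 0) / (x ^ (p + 1) * x ^ (p - Suc 0)))"
          using p unfolding e by (simp add: divide_inverse)
        also have "\<dots> = a ^ p / x ^ (p + 1)" using x by simp
        finally show ?thesis .
      qed
      ultimately show ?thesis by simp
    qed
    show "\<And>x. a \<le> x \<Longrightarrow> 0 \<le> a ^ p / x ^ (p + 1)" using a by simp
    show "((\<lambda>t. - (a ^ p / real p) * inverse (t ^ p)) \<longlongrightarrow> 0) at_top"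
    proof -
      have "((\<lambda>t::real. inverse (t ^ p)) \<longlongrightarrow> 0) at_top"
      proof (rule tendsto_inverse_0_at_top)
        show "LIM t at_top. (t::real) ^ p :> at_top"
          using p filterlim_pow_at_top[OF _ filterlim_ident, of p] by simp
      qed
      from tendsto_mult[OF tendsto_const this, of "- (a ^ p / real p)"] show ?thesis by simp
    qed
  qed
  also have "\<dots> = ennreal (1 / p)" using a by simp
  finally show ?thesis .
qed

lemma tail_integral:
  fixes a :: real and p :: nat
  assumes a: "a > 0" and p: "p \<ge> 1"
  shows "(\<integral>\<^sup>+t. ennreal (if a < \<bar>t\<bar> then a ^ p / \<bar>t\<bar> ^ (p + 1) else 0) \<partial>lborel) = ennreal (2 / p)"
proof -
  let ?h = "\<lambda>t. ennreal (a ^ p / t ^ (p + 1)) * indicator {a<..} t"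
  have eq: "\<And>t. ennreal (if a < \<bar>t\<bar> then a ^ p / \<bar>t\<bar> ^ (p + 1) else 0) = ?h t + ?h (0 + -1 * t)"
    using a by (auto split: split_indicator)
  have [measurable]: "?h \<in> borel_measurable borel" by measurable
  have "(\<integral>\<^sup>+t. ennreal (if a < \<bar>t\<bar> then a ^ p / \<bar>t\<bar> ^ (p + 1) else 0) \<partial>lborel)
     = (\<integral>\<^sup>+t. ?h t \<partial>lborel) + (\<integral>\<^sup>+t. ?h (0 + -1 * t) \<partial>lborel)"
    unfolding eq by (rule nn_integral_add) auto
  also have "(\<integral>\<^sup>+t. ?h (0 + -1 * t) \<partial>lborel) = (\<integral>\<^sup>+t. ?h t \<partial>lborel)"
    using nn_integral_real_affine[of ?h "-1" 0] by simp
  also have "(\<integral>\<^sup>+t. ?h t \<partial>lborel) = ennreal (1 / p)" by (rule tail_integral_half[OF a p])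
  finally show ?thesis using p by (simp add: ennreal_plus[symmetric] del: ennreal_plus)
qed

lemma ball_borel[measurable]: "ball (0::'p::euclidean_space) 1 \<in> sets borel"
  by simp

definition wfun :: "nat \<Rightarrow> real \<Rightarrow> 'p::euclidean_space \<Rightarrow> real" where
  "wfun p t y = (if norm y < \<bar>t\<bar> then norm y ^ p / \<bar>t\<bar> ^ (p + 1) else 0)"

lemma wfun_nonneg: "wfun p t y \<ge> 0"
  unfolding wfun_def by simp

lemma wfun_measurable[measurable]:
  "(\<lambda>(t, y). wfun p t (y::'p::euclidean_space)) \<in> borel_measurable (borel \<Otimes>\<^sub>M borel)"
  unfolding wfun_def by measurable

lemma wfun_measurable2[measurable]: "(\<lambda>t. wfun p t y) \<in> borel_measurable borel"
  unfolding wfun_def by measurable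

lemma ennreal_mult3: "0 \<le> a \<Longrightarrow> 0 \<le> b \<Longrightarrow> 0 \<le> c \<Longrightarrow> ennreal (a * b * c) = ennreal a * ennreal b * ennreal c"
  by (simp add: ennreal_mult)

lemma polar:
  fixes g :: "'p::euclidean_space \<Rightarrow> ennreal"
  assumes g[measurable]: "g \<in> borel_measurable borel"
  shows "(\<integral>\<^sup>+x. g x \<partial>lborel) = ennreal (real DIM('p) * unit_ball_vol DIM('p) / 2) *
     (\<integral>\<^sup>+u. (\<integral>\<^sup>+r. g (r *\<^sub>R u) * ennreal (\<bar>r\<bar> ^ (DIM('p) - 1)) \<partial>lborel) \<partial>sphere_unif)"
proof -
  define p where "p = DIM('p)"
  define V where "V = unit_ball_vol DIM('p)"
  have p1: "p \<ge> 1" unfolding p_def using DIM_positive[where 'a='p] by linarith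
  have V: "V > 0" unfolding V_def by (rule vol_pos)
  define G where "G u = (\<integral>\<^sup>+r. g (r *\<^sub>R u) * ennreal (\<bar>r\<bar> ^ (p - 1)) \<partial>lborel)" for u :: 'p
  define H where "H x = (\<integral>\<^sup>+t. g (t *\<^sub>R x) * ennreal (\<bar>t\<bar> ^ (p - 1)) \<partial>lborel)" for x :: 'p
  have G_eq: "G = H" unfolding G_def H_def ..
  have [measurable]: "G \<in> borel_measurable borel" unfolding G_def by measurable
  have S1: "(\<integral>\<^sup>+u. G u \<partial>sphere_unif) = (\<integral>\<^sup>+x. G (x /\<^sub>R norm x) * indicator (ball 0 1) x \<partial>lborel) / ennreal V"
    unfolding V_def by (rule nn_integral_sphere_unif) measurable
  have S2: "G (x /\<^sub>R norm x) = ennreal (norm x ^ p) * H x" if x: "x \<noteq> 0" for x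
  proof -
    have nx: "norm x > 0" using x by simp
    have "G (x /\<^sub>R norm x) = ennreal \<bar>norm x\<bar> *
        (\<integral>\<^sup>+t. g ((0 + norm x * t) *\<^sub>R (x /\<^sub>R norm x)) * ennreal (\<bar>0 + norm x * t\<bar> ^ (p - 1)) \<partial>lborel)"
      unfolding G_def by (rule nn_integral_real_affine) (use nx in auto)
    also have "(\<integral>\<^sup>+t. g ((0 + norm x * t) *\<^sub>R (x /\<^sub>R norm x)) * ennreal (\<bar>0 + norm x * t\<bar> ^ (p - 1)) \<partial>lborel)
        = (\<integral>\<^sup>+t. ennreal (norm x ^ (p - 1)) * (g (t *\<^sub>R x) * ennreal (\<bar>t\<bar> ^ (p - 1))) \<partial>lborel)"
    proof (rule nn_integral_cong)
      fix t :: real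
      have e1: "(0 + norm x * t) *\<^sub>R (x /\<^sub>R norm x) = t *\<^sub>R x" using nx by simp
      have e2: "ennreal (\<bar>0 + norm x * t\<bar> ^ (p - 1)) = ennreal (norm x ^ (p - 1)) * ennreal (\<bar>t\<bar> ^ (p - 1))"
        by (simp add: abs_mult power_mult_distrib ennreal_mult)
      show "g ((0 + norm x * t) *\<^sub>R (x /\<^sub>R norm x)) * ennreal (\<bar>0 + norm x * t\<bar> ^ (p - 1))
          = ennreal (norm x ^ (p - 1)) * (g (t *\<^sub>R x) * ennreal (\<bar>t\<bar> ^ (p - 1)))"
        unfolding e1 e2 by (simp only: ac_simps)
    qed
    also have "\<dots> = ennreal (norm x ^ (p - 1)) * H x"
      unfolding H_def by (rule nn_integral_cmult) measurable
    finally have "G (x /\<^sub>R norm x) = ennreal (norm x) * ennreal (norm x ^ (p - 1)) * H x"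
      by (simp add: ac_simps)
    also have "ennreal (norm x) * ennreal (norm x ^ (p - 1)) = ennreal (norm x ^ p)"
      using p1 by (simp add: ennreal_mult[symmetric] power_Suc[symmetric] del: power_Suc)
    finally show ?thesis .
  qed
  define K where "K x t = ennreal (indicator (ball 0 1) x * norm x ^ p) * g (t *\<^sub>R x) * ennreal (\<bar>t\<bar> ^ (p - 1))"
    for x :: 'p and t :: real
  have [measurable]: "(\<lambda>(x, t). K x t) \<in> borel_measurable (lborel \<Otimes>\<^sub>M lborel)"
    unfolding K_def by measurable
  have S3: "(\<integral>\<^sup>+x. G (x /\<^sub>R norm x) * indicator (ball 0 1) x \<partial>lborel) = (\<integral>\<^sup>+x. (\<integral>\<^sup>+t. K x t \<partial>lborel) \<partial>lborel)"
  proof (rule nn_integral_cong_AE, rule eventually_mono[OF AE_lborel_singleton[of "0::'p"]])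
    fix x :: 'p assume x: "x \<noteq> 0"
    have "G (x /\<^sub>R norm x) * indicator (ball 0 1) x = ennreal (indicator (ball 0 1) x * norm x ^ p) * H x"
      using S2[OF x] by (simp add: ennreal_mult ac_simps split: split_indicator)
    also have "\<dots> = (\<integral>\<^sup>+t. K x t \<partial>lborel)"
      unfolding H_def K_def by (subst nn_integral_cmult[symmetric]) (measurable, simp add: ac_simps)
    finally show "G (x /\<^sub>R norm x) * indicator (ball 0 1) x = (\<integral>\<^sup>+t. K x t \<partial>lborel)" .
  qed
  have S3': "(\<integral>\<^sup>+x. (\<integral>\<^sup>+t. K x t \<partial>lborel) \<partial>lborel) = (\<integral>\<^sup>+t. (\<integral>\<^sup>+x. K x t \<partial>lborel) \<partial>lborel)"
    by (rule lborel_pair.Fubini'[symmetric]) measurable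
  have S4: "(\<integral>\<^sup>+t. (\<integral>\<^sup>+x. K x t \<partial>lborel) \<partial>lborel) = (\<integral>\<^sup>+t. (\<integral>\<^sup>+y. g y * ennreal (wfun p t y) \<partial>lborel) \<partial>lborel)"
  proof (rule nn_integral_cong_AE, rule eventually_mono[OF AE_lborel_singleton[of "0::real"]])
    fix t :: real assume t: "t \<noteq> 0"
    have "(\<integral>\<^sup>+y. g y * ennreal (wfun p t y) \<partial>(lborel::'p measure))
        = (\<integral>\<^sup>+y. g y * ennreal (wfun p t y) \<partial>density (distr lborel borel (\<lambda>x. 0 + t *\<^sub>R x)) (\<lambda>_. \<bar>t\<bar> ^ DIM('p)))"
      using lborel_affine[OF t, of "0::'p"] by simp
    also have "\<dots> = (\<integral>\<^sup>+x. ennreal (\<bar>t\<bar> ^ p) * (g (t *\<^sub>R x) * ennreal (wfun p t (t *\<^sub>R x))) \<partial>lborel)"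
      by (simp add: nn_integral_density nn_integral_distr p_def)
    also have "\<dots> = (\<integral>\<^sup>+x. K x t \<partial>lborel)"
    proof (rule nn_integral_cong)
      fix x :: 'p
      have at: "\<bar>t\<bar> > 0" using t by simp
      have "\<bar>t\<bar> ^ p * wfun p t (t *\<^sub>R x) = indicator (ball 0 1) x * norm x ^ p * \<bar>t\<bar> ^ (p - 1)"
      proof (cases "norm x < 1")
        case True
        then have "norm (t *\<^sub>R x) < \<bar>t\<bar>" using at by simp
        then have "\<bar>t\<bar> ^ p * wfun p t (t *\<^sub>R x) = \<bar>t\<bar> ^ p * ((\<bar>t\<bar> * norm x) ^ p / \<bar>t\<bar> ^ (p + 1))"
          unfolding wfun_def by simp
        also have "\<dots> = norm x ^ p * \<bar>t\<bar> ^ (p - 1)"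
        proof -
          have e: "\<bar>t\<bar> ^ p * \<bar>t\<bar> ^ p = \<bar>t\<bar> ^ (p + 1) * \<bar>t\<bar> ^ (p - 1)"
            unfolding power_add[symmetric] using p1 by (simp add: algebra_simps)
          have "\<bar>t\<bar> ^ p * ((\<bar>t\<bar> * norm x) ^ p / \<bar>t\<bar> ^ (p + 1))
              = (\<bar>t\<bar> ^ p * \<bar>t\<bar> ^ p) * norm x ^ p / \<bar>t\<bar> ^ (p + 1)"
            by (simp add: power_mult_distrib mult.assoc)
          also have "\<dots> = (\<bar>t\<bar> ^ (p + 1) / \<bar>t\<bar> ^ (p + 1)) * (norm x ^ p * \<bar>t\<bar> ^ (p - 1))"
            unfolding e by (simp add: ac_simps)
          also have "\<dots> = norm x ^ p * \<bar>t\<bar> ^ (p - 1)" using at by simp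
          finally show ?thesis .
        qed
        finally show ?thesis using True by (simp add: indicator_def)
      next
        case False
        then have "\<not> norm (t *\<^sub>R x) < \<bar>t\<bar>" using at by simp
        then show ?thesis using False unfolding wfun_def by (simp add: indicator_def)
      qed
      then have tw: "ennreal (\<bar>t\<bar> ^ p) * ennreal (wfun p t (t *\<^sub>R x))
          = ennreal (indicator (ball 0 1) x * norm x ^ p) * ennreal (\<bar>t\<bar> ^ (p - 1))"
        by (simp add: ennreal_mult[symmetric] wfun_nonneg)
      show "ennreal (\<bar>t\<bar> ^ p) * (g (t *\<^sub>R x) * ennreal (wfun p t (t *\<^sub>R x))) = K x t"
      proof -
        have "ennreal (\<bar>t\<bar> ^ p) * (g (t *\<^sub>R x) * ennreal (wfun p t (t *\<^sub>R x)))
            = g (t *\<^sub>R x) * (ennreal (\<bar>t\<bar> ^ p) * ennreal (wfun p t (t *\<^sub>R x)))"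
          by (simp only: ac_simps)
        also have "\<dots> = g (t *\<^sub>R x) * (ennreal (indicator (ball 0 1) x * norm x ^ p) * ennreal (\<bar>t\<bar> ^ (p - 1)))"
          unfolding tw ..
        finally show ?thesis unfolding K_def by (simp only: ac_simps)
      qed
    qed
    finally show "(\<integral>\<^sup>+x. K x t \<partial>lborel) = (\<integral>\<^sup>+y. g y * ennreal (wfun p t y) \<partial>lborel)" by simp
  qed
  have S5: "(\<integral>\<^sup>+t. (\<integral>\<^sup>+y. g y * ennreal (wfun p t y) \<partial>lborel) \<partial>lborel)
      = (\<integral>\<^sup>+y. (\<integral>\<^sup>+t. g y * ennreal (wfun p t y) \<partial>lborel) \<partial>(lborel::'p measure))"
    by (rule lborel_pair.Fubini') measurable
  have S6: "\<dots> = (\<integral>\<^sup>+y. ennreal (2 / p) * g y \<partial>lborel)"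
  proof (rule nn_integral_cong_AE, rule eventually_mono[OF AE_lborel_singleton[of "0::'p"]])
    fix y :: 'p assume y: "y \<noteq> 0"
    have "(\<integral>\<^sup>+t. g y * ennreal (wfun p t y) \<partial>lborel) = g y * (\<integral>\<^sup>+t. ennreal (wfun p t y) \<partial>lborel)"
      by (rule nn_integral_cmult) measurable
    also have "(\<integral>\<^sup>+t. ennreal (wfun p t y) \<partial>lborel) = ennreal (2 / p)"
      unfolding wfun_def using tail_integral[of "norm y" p] y p1 by simp
    finally show "(\<integral>\<^sup>+t. g y * ennreal (wfun p t y) \<partial>lborel) = ennreal (2 / p) * g y"
      by (simp add: ac_simps)
  qed
  have S7: "(\<integral>\<^sup>+y. ennreal (2 / p) * g y \<partial>lborel) = ennreal (2 / p) * (\<integral>\<^sup>+y. g y \<partial>lborel)"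
    by (rule nn_integral_cmult) measurable
  have main: "(\<integral>\<^sup>+u. G u \<partial>sphere_unif) = ennreal (2 / p) * (\<integral>\<^sup>+y. g y \<partial>lborel) / ennreal V"
    by (simp only: S1 S3 S3' S4 S5 S6 S7)
  have pV: "real p * V / 2 * (2 / real p) * inverse V = 1" using V p1 by (simp add: field_simps)
  have E: "ennreal (real p * V / 2) * ennreal (2 / p) * ennreal (inverse V) = ennreal (real p * V / 2 * (2 / real p) * inverse V)"
    by (rule ennreal_mult3[symmetric]) (use V in auto)
  have "ennreal (real p * V / 2) * (\<integral>\<^sup>+u. G u \<partial>sphere_unif)
      = ennreal (real p * V / 2) * (ennreal (2 / p) * (\<integral>\<^sup>+y. g y \<partial>lborel) * ennreal (inverse V))"
    unfolding main divide_ennreal_def using V by (simp add: inverse_ennreal)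
  also have "\<dots> = (ennreal (real p * V / 2) * ennreal (2 / p) * ennreal (inverse V)) * (\<integral>\<^sup>+y. g y \<partial>lborel)"
    by (simp only: ac_simps)
  also have "\<dots> = ennreal (real p * V / 2 * (2 / real p) * inverse V) * (\<integral>\<^sup>+y. g y \<partial>lborel)"
    by (simp only: E)
  also have "\<dots> = (\<integral>\<^sup>+y. g y \<partial>lborel)" unfolding pV by simp
  finally show ?thesis unfolding G_def p_def V_def by simp
qed

lemma const_eq:
  assumes p: "p \<ge> 1"
  shows "real p * unit_ball_vol (real p) / 2 * pi / c_const p = C_const p"
proof -
  define a where "a = real p / 2"
  have a: "a > 0" unfolding a_def using p by simp
  have G: "Gamma (a + 1) = a * Gamma a"
    by (rule Gamma_plus1) (use a nonpos_Ints_nonpos in fastforce)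
  have Ga: "Gamma a > 0" using a by simp
  have Gb: "Gamma ((real p + 1) / 2) > 0" by simp
  have pw: "pi powr a * pi / pi powr ((real p + 1) / 2) = sqrt pi"
  proof -
    have "pi powr a * pi / pi powr ((real p + 1) / 2) = pi powr (a + 1 - (real p + 1) / 2)"
      by (simp add: powr_add powr_diff)
    also have "a + 1 - (real p + 1) / 2 = 1 / 2" unfolding a_def by (simp add: field_simps)
    finally show ?thesis by (simp add: powr_half_sqrt)
  qed
  have "real p * unit_ball_vol (real p) / 2 * pi / c_const p
      = (pi powr a * pi / pi powr ((real p + 1) / 2)) * Gamma ((real p + 1) / 2) / Gamma a"
    unfolding unit_ball_vol_def c_const_def a_def[symmetric] G using a Ga Gb
    by (simp add: a_def field_simps)
  also have "\<dots> = C_const p" unfolding C_const_def pw[symmetric] a_def ..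
  finally show ?thesis .
qed

lemma c_const_1: "c_const 1 = pi"
  unfolding c_const_def by simp

interpretation sphere: prob_space "sphere_unif :: 'p::euclidean_space measure"
  by (rule prob_space_sphere_unif)

interpretation sphere_lborel: pair_sigma_finite "sphere_unif :: 'p::euclidean_space measure" "lborel :: 'q::euclidean_space measure"
  by unfold_locales

interpretation lborel_sphere: pair_sigma_finite "lborel :: 'q::euclidean_space measure" "sphere_unif :: 'p::euclidean_space measure"
  by unfold_locales

interpretation sphere_sphere: pair_sigma_finite "sphere_unif :: 'p::euclidean_space measure" "sphere_unif :: 'q::euclidean_space measure"
  by unfold_locales

lemma polar2:
  fixes f :: "'p::euclidean_space \<times> 'q::euclidean_space \<Rightarrow> ennreal"
  assumes f[measurable]: "f \<in> borel_measurable (borel \<Otimes>\<^sub>M borel)"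
  shows "(\<integral>\<^sup>+ts. f ts \<partial>lborel) =
    ennreal (real DIM('p) * unit_ball_vol DIM('p) / 2) * ennreal (real DIM('q) * unit_ball_vol DIM('q) / 2) *
    (\<integral>\<^sup>+u. \<integral>\<^sup>+v. \<integral>\<^sup>+r. \<integral>\<^sup>+\<rho>. f (r *\<^sub>R u, \<rho> *\<^sub>R v) * ennreal (\<bar>r\<bar> ^ (DIM('p) - 1)) * ennreal (\<bar>\<rho>\<bar> ^ (DIM('q) - 1))
       \<partial>lborel \<partial>lborel \<partial>sphere_unif \<partial>sphere_unif)"
proof -
  define Kp where "Kp = ennreal (real DIM('p) * unit_ball_vol DIM('p) / 2)"
  define Kq where "Kq = ennreal (real DIM('q) * unit_ball_vol DIM('q) / 2)"
  define Q where "Q t = (\<integral>\<^sup>+v. \<integral>\<^sup>+\<rho>. f (t, \<rho> *\<^sub>R v) * ennreal (\<bar>\<rho>\<bar> ^ (DIM('q) - 1)) \<partial>lborel \<partial>sphere_unif)"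
    for t :: 'p
  have [measurable]: "Q \<in> borel_measurable borel" unfolding Q_def by measurable
  have "(\<integral>\<^sup>+ts. f ts \<partial>lborel) = (\<integral>\<^sup>+ts. f ts \<partial>(lborel \<Otimes>\<^sub>M lborel))"
    unfolding lborel_prod ..
  also have "\<dots> = (\<integral>\<^sup>+t. \<integral>\<^sup>+s. f (t, s) \<partial>lborel \<partial>lborel)"
    by (rule lborel.nn_integral_fst[symmetric]) measurable
  also have "\<dots> = (\<integral>\<^sup>+t. Kq * Q t \<partial>lborel)"
  proof (rule nn_integral_cong)
    fix t :: 'p
    show "(\<integral>\<^sup>+s. f (t, s) \<partial>lborel) = Kq * Q t"
      unfolding Kq_def Q_def by (rule polar) measurable
  qed
  also have "\<dots> = Kq * (\<integral>\<^sup>+t. Q t \<partial>lborel)"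
    by (rule nn_integral_cmult) measurable
  also have "(\<integral>\<^sup>+t. Q t \<partial>lborel) = Kp * (\<integral>\<^sup>+u. \<integral>\<^sup>+r. Q (r *\<^sub>R u) * ennreal (\<bar>r\<bar> ^ (DIM('p) - 1)) \<partial>lborel \<partial>sphere_unif)"
    unfolding Kp_def by (rule polar) measurable
  also have "(\<integral>\<^sup>+u. \<integral>\<^sup>+r. Q (r *\<^sub>R u) * ennreal (\<bar>r\<bar> ^ (DIM('p) - 1)) \<partial>lborel \<partial>sphere_unif)
     = (\<integral>\<^sup>+u. \<integral>\<^sup>+v. \<integral>\<^sup>+r. \<integral>\<^sup>+\<rho>. f (r *\<^sub>R u, \<rho> *\<^sub>R v) * ennreal (\<bar>r\<bar> ^ (DIM('p) - 1)) * ennreal (\<bar>\<rho>\<bar> ^ (DIM('q) - 1))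
       \<partial>lborel \<partial>lborel \<partial>sphere_unif \<partial>sphere_unif)"
  proof (rule nn_integral_cong)
    fix u :: 'p
    have "(\<integral>\<^sup>+r. Q (r *\<^sub>R u) * ennreal (\<bar>r\<bar> ^ (DIM('p) - 1)) \<partial>lborel)
       = (\<integral>\<^sup>+r. \<integral>\<^sup>+v. \<integral>\<^sup>+\<rho>. f (r *\<^sub>R u, \<rho> *\<^sub>R v) * ennreal (\<bar>r\<bar> ^ (DIM('p) - 1)) * ennreal (\<bar>\<rho>\<bar> ^ (DIM('q) - 1))
         \<partial>lborel \<partial>sphere_unif \<partial>lborel)"
    proof (rule nn_integral_cong)
      fix r :: real
      have "Q (r *\<^sub>R u) * ennreal (\<bar>r\<bar> ^ (DIM('p) - 1))
         = (\<integral>\<^sup>+v. (\<integral>\<^sup>+\<rho>. f (r *\<^sub>R u, \<rho> *\<^sub>R v) * ennreal (\<bar>\<rho>\<bar> ^ (DIM('q) - 1)) \<partial>lborel) * ennreal (\<bar>r\<bar> ^ (DIM('p) - 1)) \<partial>sphere_unif)"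
        unfolding Q_def by (rule nn_integral_multc[symmetric]) measurable
      also have "\<dots> = (\<integral>\<^sup>+v. \<integral>\<^sup>+\<rho>. f (r *\<^sub>R u, \<rho> *\<^sub>R v) * ennreal (\<bar>\<rho>\<bar> ^ (DIM('q) - 1)) * ennreal (\<bar>r\<bar> ^ (DIM('p) - 1)) \<partial>lborel \<partial>sphere_unif)"
        by (intro nn_integral_cong nn_integral_multc[symmetric]) measurable
      finally show "Q (r *\<^sub>R u) * ennreal (\<bar>r\<bar> ^ (DIM('p) - 1))
         = (\<integral>\<^sup>+v. \<integral>\<^sup>+\<rho>. f (r *\<^sub>R u, \<rho> *\<^sub>R v) * ennreal (\<bar>r\<bar> ^ (DIM('p) - 1)) * ennreal (\<bar>\<rho>\<bar> ^ (DIM('q) - 1))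
         \<partial>lborel \<partial>sphere_unif)"
        by (simp only: ac_simps)
    qed
    also have "\<dots> = (\<integral>\<^sup>+v. \<integral>\<^sup>+r. \<integral>\<^sup>+\<rho>. f (r *\<^sub>R u, \<rho> *\<^sub>R v) * ennreal (\<bar>r\<bar> ^ (DIM('p) - 1)) * ennreal (\<bar>\<rho>\<bar> ^ (DIM('q) - 1))
         \<partial>lborel \<partial>lborel \<partial>sphere_unif)"
      by (rule sphere_lborel.Fubini') measurable
    finally show "(\<integral>\<^sup>+r. Q (r *\<^sub>R u) * ennreal (\<bar>r\<bar> ^ (DIM('p) - 1)) \<partial>lborel)
       = (\<integral>\<^sup>+v. \<integral>\<^sup>+r. \<integral>\<^sup>+\<rho>. f (r *\<^sub>R u, \<rho> *\<^sub>R v) * ennreal (\<bar>r\<bar> ^ (DIM('p) - 1)) * ennreal (\<bar>\<rho>\<bar> ^ (DIM('q) - 1))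
         \<partial>lborel \<partial>lborel \<partial>sphere_unif)" .
  qed
  finally show ?thesis unfolding Kp_def Kq_def by (simp only: ac_simps)
qed

lemma c_const_pos: "c_const p > 0"
  unfolding c_const_def by simp

lemma pow_split: "p \<ge> 1 \<Longrightarrow> (x::real) ^ (p + 1) = x ^ (p - 1) * x ^ 2"
  by (simp add: power_add[symmetric])

lemma pt_real:
  fixes F r \<rho> :: real and p q :: nat and cp cq :: real
  assumes p: "p \<ge> 1" and q: "q \<ge> 1" and cp: "cp > 0" and cq: "cq > 0"
  shows "F / (cp * cq * \<bar>r\<bar> ^ (p + 1) * \<bar>\<rho>\<bar> ^ (q + 1)) * \<bar>r\<bar> ^ (p - 1) * \<bar>\<rho>\<bar> ^ (q - 1)
       = pi * pi / (cp * cq) * (F / (pi * pi * \<bar>r\<bar> ^ 2 * \<bar>\<rho>\<bar> ^ 2))"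
proof (cases "r = 0 \<or> \<rho> = 0")
  case True
  then show ?thesis using p q by auto
next
  case False
  then have r: "\<bar>r\<bar> > 0" and s: "\<bar>\<rho>\<bar> > 0" by auto
  show ?thesis unfolding pow_split[OF p, of "\<bar>r\<bar>"] pow_split[OF q, of "\<bar>\<rho>\<bar>"]
    using r s cp cq by (simp add: field_simps)
qed

lemma pt_eq:
  fixes F :: "'p::euclidean_space \<times> 'q::euclidean_space \<Rightarrow> real" and u :: 'p and v :: 'q
  assumes Fnn: "\<And>ts. F ts \<ge> 0" and u: "norm u = 1" and v: "norm v = 1"
  shows "ennreal (F (r *\<^sub>R u, \<rho> *\<^sub>R v) / (c_const DIM('p) * c_const DIM('q) * norm (r *\<^sub>R u) ^ (DIM('p) + 1) * norm (\<rho> *\<^sub>R v) ^ (DIM('q) + 1)))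
       * ennreal (\<bar>r\<bar> ^ (DIM('p) - 1)) * ennreal (\<bar>\<rho>\<bar> ^ (DIM('q) - 1))
     = ennreal (pi * pi / (c_const DIM('p) * c_const DIM('q))) *
       ennreal (F (r *\<^sub>R u, \<rho> *\<^sub>R v) / (c_const 1 * c_const 1 * norm r ^ 2 * norm \<rho> ^ 2))"
proof -
  define cp where "cp = c_const DIM('p)"
  define cq where "cq = c_const DIM('q)"
  define x where "x = F (r *\<^sub>R u, \<rho> *\<^sub>R v)"
  have cp: "cp > 0" and cq: "cq > 0" unfolding cp_def cq_def by (simp_all add: c_const_pos)
  have x: "x \<ge> 0" unfolding x_def by (rule Fnn)
  have p: "DIM('p) \<ge> 1" and q: "DIM('q) \<ge> 1" using DIM_positive[where 'a='p] DIM_positive[where 'a='q] by linarith+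
  have "ennreal (x / (cp * cq * \<bar>r\<bar> ^ (DIM('p) + 1) * \<bar>\<rho>\<bar> ^ (DIM('q) + 1)))
       * ennreal (\<bar>r\<bar> ^ (DIM('p) - 1)) * ennreal (\<bar>\<rho>\<bar> ^ (DIM('q) - 1))
      = ennreal (x / (cp * cq * \<bar>r\<bar> ^ (DIM('p) + 1) * \<bar>\<rho>\<bar> ^ (DIM('q) + 1))
       * \<bar>r\<bar> ^ (DIM('p) - 1) * \<bar>\<rho>\<bar> ^ (DIM('q) - 1))"
    by (rule ennreal_mult3[symmetric]) (use x cp cq in auto)
  also have "\<dots> = ennreal (pi * pi / (cp * cq) * (x / (pi * pi * \<bar>r\<bar> ^ 2 * \<bar>\<rho>\<bar> ^ 2)))"
    by (simp only: pt_real[OF p q cp cq])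
  also have "\<dots> = ennreal (pi * pi / (cp * cq)) * ennreal (x / (pi * pi * \<bar>r\<bar> ^ 2 * \<bar>\<rho>\<bar> ^ 2))"
    by (rule ennreal_mult) (use x cp cq in auto)
  finally show ?thesis unfolding cp_def[symmetric] cq_def[symmetric] x_def[symmetric] c_const_1
    using u v by simp
qed

lemma core:
  fixes F :: "'p::euclidean_space \<times> 'q::euclidean_space \<Rightarrow> real"
  assumes F[measurable]: "F \<in> borel_measurable (borel \<Otimes>\<^sub>M borel)" and Fnn: "\<And>ts. F ts \<ge> 0"
  shows "(\<integral>\<^sup>+ts. ennreal (F ts / (c_const DIM('p) * c_const DIM('q) * norm (fst ts) ^ (DIM('p) + 1) * norm (snd ts) ^ (DIM('q) + 1))) \<partial>lborel)
     = ennreal (C_const DIM('p) * C_const DIM('q)) *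
       (\<integral>\<^sup>+uv. (\<integral>\<^sup>+rs. ennreal (F (fst rs *\<^sub>R fst uv, snd rs *\<^sub>R snd uv) /
           (c_const 1 * c_const 1 * norm (fst rs) ^ 2 * norm (snd rs) ^ 2)) \<partial>(lborel::(real \<times> real) measure)) \<partial>(sphere_unif \<Otimes>\<^sub>M sphere_unif))"
proof -
  define f where "f ts = ennreal (F ts / (c_const DIM('p) * c_const DIM('q) * norm (fst ts) ^ (DIM('p) + 1) * norm (snd ts) ^ (DIM('q) + 1)))"
    for ts :: "'p \<times> 'q"
  have [measurable]: "f \<in> borel_measurable (borel \<Otimes>\<^sub>M borel)" unfolding f_def by measurable
  define h where "h u v r \<rho> = ennreal (F (r *\<^sub>R u, \<rho> *\<^sub>R v) / (c_const 1 * c_const 1 * norm r ^ 2 * norm \<rho> ^ 2))"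
    for u :: 'p and v :: 'q and r \<rho> :: real
  have [measurable]: "(\<lambda>(x, y). h (fst x) (snd x) (fst y) (snd y)) \<in> borel_measurable ((borel \<Otimes>\<^sub>M borel) \<Otimes>\<^sub>M (borel \<Otimes>\<^sub>M borel))"
    unfolding h_def by measurable
  define D where "D u v = (\<integral>\<^sup>+rs. h u v (fst rs) (snd rs) \<partial>(lborel::(real \<times> real) measure))" for u v
  have Dm[measurable]: "(\<lambda>uv. D (fst uv) (snd uv)) \<in> borel_measurable (sphere_unif \<Otimes>\<^sub>M sphere_unif)"
  proof -
    have hm0: "(\<lambda>(x, y). h (fst x) (snd x) (fst y) (snd y)) \<in> borel_measurable ((borel \<Otimes>\<^sub>M borel) \<Otimes>\<^sub>M (borel \<Otimes>\<^sub>M borel))"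
      by measurable
    have se: "sets ((borel \<Otimes>\<^sub>M borel) \<Otimes>\<^sub>M (lborel::(real \<times> real) measure)) = sets ((borel \<Otimes>\<^sub>M borel) \<Otimes>\<^sub>M (borel \<Otimes>\<^sub>M borel))"
      by (rule sets_pair_measure_cong) (simp_all only: sets_lborel borel_prod)
    have hm: "(\<lambda>(x, y). h (fst x) (snd x) (fst y) (snd y)) \<in> borel_measurable ((borel \<Otimes>\<^sub>M borel) \<Otimes>\<^sub>M (lborel::(real \<times> real) measure))"
      unfolding measurable_cong_sets[OF se refl] by (rule hm0)
    have "(\<lambda>uv. D (fst uv) (snd uv)) \<in> borel_measurable (borel \<Otimes>\<^sub>M borel)"
      using lborel.borel_measurable_nn_integral[OF hm] unfolding D_def by simp
    moreover have se2: "sets ((sphere_unif::'p measure) \<Otimes>\<^sub>M (sphere_unif::'q measure)) = sets (borel \<Otimes>\<^sub>M borel)"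
      by (rule sets_pair_measure_cong) (simp_all only: sets_sphere_unif)
    ultimately show ?thesis by (simp only: measurable_cong_sets[OF se2 refl])
  qed
  have Du[measurable]: "D u \<in> borel_measurable borel" for u
  proof -
    have "(\<lambda>v. D u v) \<in> borel_measurable sphere_unif" using measurable_Pair2[OF Dm, of u] by simp
    then show ?thesis by (simp only: measurable_cong_sets[OF sets_sphere_unif refl])
  qed
  have hm1: "(\<lambda>rs. h u v (fst rs) (snd rs)) \<in> borel_measurable (lborel \<Otimes>\<^sub>M lborel)" for u v
    unfolding h_def by measurable
  have hm2[measurable]: "h u v r \<in> borel_measurable borel" for u v r
    unfolding h_def by measurable
  have hm3[measurable]: "(\<lambda>x. h u v (fst x) (snd x)) \<in> borel_measurable (borel \<Otimes>\<^sub>M borel)" for u v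
    unfolding h_def by measurable
  have D2: "D u v = (\<integral>\<^sup>+r. \<integral>\<^sup>+\<rho>. h u v r \<rho> \<partial>lborel \<partial>lborel)" for u v
  proof -
    have "D u v = (\<integral>\<^sup>+rs. h u v (fst rs) (snd rs) \<partial>(lborel \<Otimes>\<^sub>M lborel))"
      unfolding D_def lborel_prod ..
    also have "\<dots> = (\<integral>\<^sup>+r. \<integral>\<^sup>+\<rho>. h u v r \<rho> \<partial>lborel \<partial>lborel)"
      by (subst lborel.nn_integral_fst[symmetric]) (simp_all add: hm1)
    finally show ?thesis .
  qed
  define k where "k = pi * pi / (c_const DIM('p) * c_const DIM('q))"
  have "(\<integral>\<^sup>+ts. f ts \<partial>lborel) =
    ennreal (real DIM('p) * unit_ball_vol DIM('p) / 2) * ennreal (real DIM('q) * unit_ball_vol DIM('q) / 2) *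
    (\<integral>\<^sup>+u. \<integral>\<^sup>+v. \<integral>\<^sup>+r. \<integral>\<^sup>+\<rho>. f (r *\<^sub>R u, \<rho> *\<^sub>R v) * ennreal (\<bar>r\<bar> ^ (DIM('p) - 1)) * ennreal (\<bar>\<rho>\<bar> ^ (DIM('q) - 1))
       \<partial>lborel \<partial>lborel \<partial>sphere_unif \<partial>sphere_unif)"
    by (rule polar2) measurable
  also have "(\<integral>\<^sup>+u. \<integral>\<^sup>+v. \<integral>\<^sup>+r. \<integral>\<^sup>+\<rho>. f (r *\<^sub>R u, \<rho> *\<^sub>R v) * ennreal (\<bar>r\<bar> ^ (DIM('p) - 1)) * ennreal (\<bar>\<rho>\<bar> ^ (DIM('q) - 1))
       \<partial>lborel \<partial>lborel \<partial>sphere_unif \<partial>sphere_unif)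
     = (\<integral>\<^sup>+u. \<integral>\<^sup>+v. ennreal k * D u v \<partial>sphere_unif \<partial>sphere_unif)"
  proof (rule nn_integral_cong_AE, rule eventually_mono[OF AE_sphere_unif])
    fix u :: 'p assume u: "norm u = 1"
    show "(\<integral>\<^sup>+v. \<integral>\<^sup>+r. \<integral>\<^sup>+\<rho>. f (r *\<^sub>R u, \<rho> *\<^sub>R v) * ennreal (\<bar>r\<bar> ^ (DIM('p) - 1)) * ennreal (\<bar>\<rho>\<bar> ^ (DIM('q) - 1))
       \<partial>lborel \<partial>lborel \<partial>sphere_unif) = (\<integral>\<^sup>+v. ennreal k * D u v \<partial>sphere_unif)"
    proof (rule nn_integral_cong_AE, rule eventually_mono[OF AE_sphere_unif])
      fix v :: 'q assume v: "norm v = 1"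
      have "(\<integral>\<^sup>+r. \<integral>\<^sup>+\<rho>. f (r *\<^sub>R u, \<rho> *\<^sub>R v) * ennreal (\<bar>r\<bar> ^ (DIM('p) - 1)) * ennreal (\<bar>\<rho>\<bar> ^ (DIM('q) - 1))
         \<partial>lborel \<partial>lborel) = (\<integral>\<^sup>+r. \<integral>\<^sup>+\<rho>. ennreal k * h u v r \<rho> \<partial>lborel \<partial>lborel)"
        unfolding f_def h_def k_def fst_conv snd_conv
        by (intro nn_integral_cong pt_eq[OF Fnn u v])
      also have "\<dots> = (\<integral>\<^sup>+r. ennreal k * \<integral>\<^sup>+\<rho>. h u v r \<rho> \<partial>lborel \<partial>lborel)"
        by (intro nn_integral_cong nn_integral_cmult) measurable
      also have "\<dots> = ennreal k * D u v"
        unfolding D2 by (rule nn_integral_cmult) measurable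
      finally show "(\<integral>\<^sup>+r. \<integral>\<^sup>+\<rho>. f (r *\<^sub>R u, \<rho> *\<^sub>R v) * ennreal (\<bar>r\<bar> ^ (DIM('p) - 1)) * ennreal (\<bar>\<rho>\<bar> ^ (DIM('q) - 1))
         \<partial>lborel \<partial>lborel) = ennreal k * D u v" .
    qed
  qed
  also have "(\<integral>\<^sup>+u. \<integral>\<^sup>+v. ennreal k * D u v \<partial>sphere_unif \<partial>sphere_unif)
      = ennreal k * (\<integral>\<^sup>+u. \<integral>\<^sup>+v. D u v \<partial>sphere_unif \<partial>sphere_unif)"
  proof -
    have "(\<integral>\<^sup>+u. \<integral>\<^sup>+v. ennreal k * D u v \<partial>sphere_unif \<partial>sphere_unif)
      = (\<integral>\<^sup>+u. ennreal k * \<integral>\<^sup>+v. D u v \<partial>sphere_unif \<partial>sphere_unif)"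
      by (intro nn_integral_cong nn_integral_cmult) (use Dm in measurable)
    also have "\<dots> = ennreal k * (\<integral>\<^sup>+u. \<integral>\<^sup>+v. D u v \<partial>sphere_unif \<partial>sphere_unif)"
      by (rule nn_integral_cmult) (use Dm in measurable)
    finally show ?thesis .
  qed
  also have "(\<integral>\<^sup>+u. \<integral>\<^sup>+v. D u v \<partial>sphere_unif \<partial>sphere_unif) = (\<integral>\<^sup>+uv. D (fst uv) (snd uv) \<partial>(sphere_unif \<Otimes>\<^sub>M sphere_unif))"
    using sphere.nn_integral_fst[OF Dm] by simp
  finally have main: "(\<integral>\<^sup>+ts. f ts \<partial>lborel) =
    ennreal (real DIM('p) * unit_ball_vol DIM('p) / 2) * ennreal (real DIM('q) * unit_ball_vol DIM('q) / 2) *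
    (ennreal k * (\<integral>\<^sup>+uv. D (fst uv) (snd uv) \<partial>(sphere_unif \<Otimes>\<^sub>M sphere_unif)))" .
  have p: "DIM('p) \<ge> 1" and q: "DIM('q) \<ge> 1" using DIM_positive[where 'a='p] DIM_positive[where 'a='q] by linarith+
  have cp: "c_const DIM('p) > 0" and cq: "c_const DIM('q) > 0" by (simp_all add: c_const_pos)
  have vp: "unit_ball_vol DIM('p) > 0" and vq: "unit_ball_vol DIM('q) > 0" by (simp_all add: vol_pos)
  have Kc: "(real DIM('p) * unit_ball_vol DIM('p) / 2) * (real DIM('q) * unit_ball_vol DIM('q) / 2) * k
      = C_const DIM('p) * C_const DIM('q)"
    unfolding const_eq[OF p, symmetric] const_eq[OF q, symmetric] k_def using cp cq by (simp add: field_simps)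
  have eqK: "ennreal (real DIM('p) * unit_ball_vol DIM('p) / 2) * ennreal (real DIM('q) * unit_ball_vol DIM('q) / 2) * ennreal k
      = ennreal (C_const DIM('p) * C_const DIM('q))"
    unfolding Kc[symmetric] by (rule ennreal_mult3[symmetric]) (use vp vq cp cq in \<open>auto simp: k_def\<close>)
  have "(\<integral>\<^sup>+ts. f ts \<partial>lborel) = (ennreal (real DIM('p) * unit_ball_vol DIM('p) / 2) * ennreal (real DIM('q) * unit_ball_vol DIM('q) / 2) * ennreal k)
     * (\<integral>\<^sup>+uv. D (fst uv) (snd uv) \<partial>(sphere_unif \<Otimes>\<^sub>M sphere_unif))"
    unfolding main by (simp only: mult.assoc)
  also have "\<dots> = ennreal (C_const DIM('p) * C_const DIM('q)) * (\<integral>\<^sup>+uv. D (fst uv) (snd uv) \<partial>(sphere_unif \<Otimes>\<^sub>M sphere_unif))"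
    unfolding eqK ..
  finally show ?thesis unfolding f_def D_def h_def .
qed

lemma cis_meas[measurable]: "cis \<in> borel_measurable borel"
  by (rule borel_measurable_continuous_onI) (use continuous_on_cis[OF continuous_on_id] in simp)

theorem lemma4p2:
  fixes M :: "'a measure"
    and X :: "'a \<Rightarrow> 'p::euclidean_space" and Y :: "'a \<Rightarrow> 'q::euclidean_space"
    and n :: nat and Xs :: "nat \<Rightarrow> 'p" and Ys :: "nat \<Rightarrow> 'q"
  assumes "prob_space M"
    and "X \<in> borel_measurable M" and "Y \<in> borel_measurable M"
  shows "dcov M X Y = ennreal (C_const DIM('p) * C_const DIM('q)) *
           (\<integral>\<^sup>+ uv. dcov M (\<lambda>\<omega>. fst uv \<bullet> X \<omega>) (\<lambda>\<omega>. snd uv \<bullet> Y \<omega>)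
              \<partial>(sphere_unif \<Otimes>\<^sub>M sphere_unif)) \<and>
         dcov_n n Xs Ys = ennreal (C_const DIM('p) * C_const DIM('q)) *
           (\<integral>\<^sup>+ uv. dcov_n n (\<lambda>j. fst uv \<bullet> Xs j) (\<lambda>j. snd uv \<bullet> Ys j)
              \<partial>(sphere_unif \<Otimes>\<^sub>M sphere_unif))"
proof
  interpret M: prob_space M by fact
  note [measurable] = assms(2,3)
  define F where "F ts = (cmod (joint_char_fun M X Y (fst ts) (snd ts) - char_fun M X (fst ts) * char_fun M Y (snd ts)))\<^sup>2"
    for ts :: "'p \<times> 'q"
  have Fm: "F \<in> borel_measurable (borel \<Otimes>\<^sub>M borel)"
    unfolding F_def joint_char_fun_def char_fun_def by measurable
  have "dcov M X Y = (\<integral>\<^sup>+ts. ennreal (F ts / (c_const DIM('p) * c_const DIM('q) * norm (fst ts) ^ (DIM('p) + 1) * norm (snd ts) ^ (DIM('q) + 1))) \<partial>lborel)"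
    unfolding dcov_def dcov_integral_def F_def ..
  also have "\<dots> = ennreal (C_const DIM('p) * C_const DIM('q)) *
       (\<integral>\<^sup>+uv. (\<integral>\<^sup>+rs. ennreal (F (fst rs *\<^sub>R fst uv, snd rs *\<^sub>R snd uv) /
           (c_const 1 * c_const 1 * norm (fst rs) ^ 2 * norm (snd rs) ^ 2)) \<partial>(lborel::(real \<times> real) measure)) \<partial>(sphere_unif \<Otimes>\<^sub>M sphere_unif))"
    by (rule core[OF Fm]) (simp add: F_def)
  also have "(\<integral>\<^sup>+uv. (\<integral>\<^sup>+rs. ennreal (F (fst rs *\<^sub>R fst uv, snd rs *\<^sub>R snd uv) /
           (c_const 1 * c_const 1 * norm (fst rs) ^ 2 * norm (snd rs) ^ 2)) \<partial>(lborel::(real \<times> real) measure)) \<partial>(sphere_unif \<Otimes>\<^sub>M sphere_unif))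
      = (\<integral>\<^sup>+ uv. dcov M (\<lambda>\<omega>. fst uv \<bullet> X \<omega>) (\<lambda>\<omega>. snd uv \<bullet> Y \<omega>) \<partial>(sphere_unif \<Otimes>\<^sub>M sphere_unif))"
    by (intro nn_integral_cong)
       (simp add: dcov_def dcov_integral_def F_def char_fun_def joint_char_fun_def inner_scaleR_left power2_eq_square)
  finally show "dcov M X Y = ennreal (C_const DIM('p) * C_const DIM('q)) *
           (\<integral>\<^sup>+ uv. dcov M (\<lambda>\<omega>. fst uv \<bullet> X \<omega>) (\<lambda>\<omega>. snd uv \<bullet> Y \<omega>)
              \<partial>(sphere_unif \<Otimes>\<^sub>M sphere_unif))" .
next
  define F where "F ts = (cmod (emp_joint_char_fun n Xs Ys (fst ts) (snd ts) - emp_char_fun n Xs (fst ts) * emp_char_fun n Ys (snd ts)))\<^sup>2"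
    for ts :: "'p \<times> 'q"
  have Fm: "F \<in> borel_measurable (borel \<Otimes>\<^sub>M borel)"
    unfolding F_def emp_joint_char_fun_def emp_char_fun_def by measurable
  have "dcov_n n Xs Ys = (\<integral>\<^sup>+ts. ennreal (F ts / (c_const DIM('p) * c_const DIM('q) * norm (fst ts) ^ (DIM('p) + 1) * norm (snd ts) ^ (DIM('q) + 1))) \<partial>lborel)"
    unfolding dcov_n_def dcov_integral_def F_def ..
  also have "\<dots> = ennreal (C_const DIM('p) * C_const DIM('q)) *
       (\<integral>\<^sup>+uv. (\<integral>\<^sup>+rs. ennreal (F (fst rs *\<^sub>R fst uv, snd rs *\<^sub>R snd uv) /
           (c_const 1 * c_const 1 * norm (fst rs) ^ 2 * norm (snd rs) ^ 2)) \<partial>(lborel::(real \<times> real) measure)) \<partial>(sphere_unif \<Otimes>\<^sub>M sphere_unif))"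
    by (rule core[OF Fm]) (simp add: F_def)
  also have "(\<integral>\<^sup>+uv. (\<integral>\<^sup>+rs. ennreal (F (fst rs *\<^sub>R fst uv, snd rs *\<^sub>R snd uv) /
           (c_const 1 * c_const 1 * norm (fst rs) ^ 2 * norm (snd rs) ^ 2)) \<partial>(lborel::(real \<times> real) measure)) \<partial>(sphere_unif \<Otimes>\<^sub>M sphere_unif))
      = (\<integral>\<^sup>+ uv. dcov_n n (\<lambda>j. fst uv \<bullet> Xs j) (\<lambda>j. snd uv \<bullet> Ys j) \<partial>(sphere_unif \<Otimes>\<^sub>M sphere_unif))"
    by (intro nn_integral_cong)
       (simp add: dcov_n_def dcov_integral_def F_def emp_char_fun_def emp_joint_char_fun_def inner_scaleR_left power2_eq_square)
  finally show "dcov_n n Xs Ys = ennreal (C_const DIM('p) * C_const DIM('q)) *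
           (\<integral>\<^sup>+ uv. dcov_n n (\<lambda>j. fst uv \<bullet> Xs j) (\<lambda>j. snd uv \<bullet> Ys j)
              \<partial>(sphere_unif \<Otimes>\<^sub>M sphere_unif))" .
qed

end
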